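(* Let $n\ge 2$, let $P\neq[n,n-1,\ldots,1]$ be an arithmetically progressed permutation with ratio $k$, and let $\mathsf{T}_P$ be its associated ternary string. If $\mathsf{T}_P$ contains exactly two distinct characters, then $\mathsf{BWT}_{\mathsf{T}_P}$ consists of exactly $2$ runs; if $\mathsf{T}_P$ contains exactly three distinct characters, then $\mathsf{BWT}_{\mathsf{T}_P}$ consists of exactly $3$ runs.
   Context: A run of a string is a maximal block of consecutive equal characters. Alphabet $\{\mathtt{a}<\mathtt{b}<\mathtt{c}\}$, lexicographic order with a proper prefix smaller than the longer string; suffix array $\mathsf{SA}_{\mathsf{T}}$: permutation of $[1..n]$ such that $\mathsf{T}[\mathsf{SA}_{\mathsf{T}}[i]..n]$ is the $i$-th smallest suffix. $x\bmod n$ denotes the representative of $x$ modulo $n$ in $[1..n]$. An arithmetically progressed permutation of length $n$ with ratio $k\in[1..n-1]$ is a permutation $P=[p_1,\ldots,p_n]$ of $[1..n]$ with $p_{i+1}=p_i+k\bmod n$. Ternary string associated with $P$: cut $P$ immediately after the entry $n-k$ and immediately after the entry $(p_1-k-1)\bmod n$, giving consecutive possibly empty blocks $A,B,C$ with $P=ABC$; set $\mathsf{T}_P[p_i]=\mathtt{a},\mathtt{b},\mathtt{c}$ according as $p_i$ lies in $A$, $B$, $C$. BWT: $\mathsf{BWT}_{\mathsf{T}}[i]=\mathsf{T}[\mathsf{SA}_{\mathsf{T}}[i]-1\bmod n]$. *)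

theory Defs
  imports Main "HOL-Library.Char_ord" "HOL-Library.List_Lexorder"
begin

definition modn :: "int \<Rightarrow> nat \<Rightarrow> int" where
  "modn x n = (x - 1) mod int n + 1"

text \<open>Arithmetically progressed permutation of length n with ratio k (lists are 0-indexed,
  entry p_i is P ! (i-1)).\<close>
definition ap_perm :: "nat \<Rightarrow> nat \<Rightarrow> nat list \<Rightarrow> bool" where
  "ap_perm n k P \<longleftrightarrow> length P = n \<and> distinct P \<and> set P = {1..n} \<and> 1 \<le> k \<and> k \<le> n - 1 \<and>
     (\<forall>i. i + 1 < n \<longrightarrow> int (P ! (i + 1)) = modn (int (P ! i) + int k) n)"

definition pos1 :: "nat list \<Rightarrow> nat \<Rightarrow> nat" where
  "pos1 P x = Suc (THE i. i < length P \<and> P ! i = x)"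

text \<open>Ternary string associated with P (as a list of length n, T[j] = list entry j-1).
  Cuts are made after the entries n-k and (p_1-k-1) mod n; A = P up to the first cut,
  B = between the cuts, C = the rest.\<close>
definition ternary :: "nat \<Rightarrow> nat list \<Rightarrow> char list" where
  "ternary k P = (let n = length P;
       c1 = pos1 P (n - k);
       c2 = pos1 P (nat (modn (int (P ! 0) - int k - 1) n));
       lo = min c1 c2; hi = max c1 c2
     in map (\<lambda>p. if p \<in> set (take lo P) then CHR ''a''
                 else if p \<in> set (take hi P) then CHR ''b'' else CHR ''c'') [1..<n+1])"

text \<open>Suffix array (1-based entries): positions sorted by their suffixes in lexicographic
  order (proper prefix smaller).\<close>
definition SA :: "char list \<Rightarrow> nat list" where
  "SA T = sort_key (\<lambda>i. drop (i - 1) T) [1..<length T + 1]"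

definition BWT :: "char list \<Rightarrow> char list" where
  "BWT T = map (\<lambda>i. T ! (nat (modn (int i - 1) (length T)) - 1)) (SA T)"

definition runs :: "'a list \<Rightarrow> nat" where
  "runs xs = length (remdups_adj xs)"

end

theory Submission
  imports Defs "HOL-Library.Multiset"
begin

lemma ra: "ys = [] \<or> hd ys \<noteq> x \<Longrightarrow> remdups_adj (replicate (Suc p) x @ ys) = x # remdups_adj ys"
proof (induction p)
  case 0
  then show ?case by (cases ys) (auto simp: remdups_adj_Cons split: list.split)
next
  case (Suc p)
  then show ?case by (simp add: remdups_adj_Cons)
qed

lemma cnt: "x \<noteq> y \<Longrightarrow> y \<noteq> z \<Longrightarrow> x \<noteq> z \<Longrightarrow>
  length (remdups_adj (replicate p x @ replicate q y @ replicate r z)) =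
  card (set (replicate p x @ replicate q y @ replicate r z))"
  apply (cases p; cases q; cases r)
  apply (simp_all add: ra remdups_adj_replicate del: replicate_Suc)
  done

lemma map_const: "(\<And>j. x \<le> j \<Longrightarrow> j < y \<Longrightarrow> f j = c) \<Longrightarrow> map f [x..<y] = replicate (y - x) c"
  by (rule nth_equalityI) auto

lemma upt_split: "x \<le> y \<Longrightarrow> y \<le> z \<Longrightarrow> [x..<z] = [x..<y] @ [y..<z]"
  using upt_add_eq_append[of x y "z - y"] by simp

locale apc =
  fixes n k :: nat and P :: "nat list"
  assumes n2: "n \<ge> 2" and ap: "ap_perm n k P"
begin

lemma lenP: "length P = n" and distP: "distinct P" and setP: "set P = {1..n}"
  and k1: "1 \<le> k" and kn: "k \<le> n - 1"
  and rec: "\<And>i. i + 1 < n \<Longrightarrow> int (P ! (i + 1)) = modn (int (P ! i) + int k) n"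
  using ap unfolding ap_perm_def by auto

definition p0 where "p0 = P ! 0 - 1"
definition v where "v i = (p0 + i * k) mod n"

lemma P_in: "i < n \<Longrightarrow> P ! i \<in> {1..n}"
  using setP lenP nth_mem by blast

lemma nthP: "i < n \<Longrightarrow> P ! i = v i + 1"
proof (induction i)
  case 0
  then show ?case using P_in[of 0] by (auto simp: v_def p0_def)
next
  case (Suc i)
  have r: "int (P ! Suc i) = modn (int (P ! i) + int k) n" using rec[of i] Suc by simp
  have "int (P ! Suc i) = (int (v i) + int k) mod int n + 1"
    using r Suc by (simp add: modn_def)
  also have "\<dots> = int ((v i + k) mod n) + 1" by (simp add: zmod_int)
  also have "(v i + k) mod n = v (Suc i)" unfolding v_def by (simp add: mod_add_left_eq mod_add_right_eq algebra_simps)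
  finally show ?case by simp
qed

lemma v_lt: "v i < n" using n2 by (simp add: v_def)

definition idx where "idx u = (THE i. i < n \<and> P ! i = Suc u)"

lemma idx_v: "i < n \<Longrightarrow> idx (v i) = i"
  unfolding idx_def
  apply (rule the_equality)
  using nthP apply simp
  using distP lenP nthP by (metis Suc_eq_plus1 nth_eq_iff_index_eq)

lemma idx_ex: "u < n \<Longrightarrow> \<exists>i<n. v i = u"
proof -
  assume "u < n"
  then have "Suc u \<in> set P" using setP by auto
  then obtain i where "i < n" "P ! i = Suc u" using lenP by (metis in_set_conv_nth)
  then show ?thesis using nthP by auto
qed

lemma idx_lt: "u < n \<Longrightarrow> idx u < n" using idx_ex idx_v by metis
lemma v_idx: "u < n \<Longrightarrow> v (idx u) = u" using idx_ex idx_v by metis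

lemma v_Suc: "v (Suc i) = (v i + k) mod n"
  unfolding v_def by (simp add: mod_add_left_eq mod_add_right_eq algebra_simps)

lemma idx_step: "u < n \<Longrightarrow> idx u \<noteq> n - 1 \<Longrightarrow> idx ((u + k) mod n) = Suc (idx u)"
proof -
  assume a: "u < n" "idx u \<noteq> n - 1"
  then have "Suc (idx u) < n" using idx_lt by fastforce
  moreover have "v (Suc (idx u)) = (u + k) mod n" using v_Suc v_idx a by simp
  ultimately show ?thesis using idx_v by metis
qed

lemma in_take: "u < n \<Longrightarrow> (Suc u \<in> set (take m P)) = (idx u < m)"
proof
  assume a: "u < n" "Suc u \<in> set (take m P)"
  then obtain i where "i < min m n" "P ! i = Suc u" using lenP
    by (auto simp: in_set_conv_nth)
  then have "v i = u" using nthP by auto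
  then show "idx u < m" using idx_v \<open>i < min m n\<close> by auto
next
  assume a: "u < n" "idx u < m"
  then have "take m P ! idx u = Suc u" using nthP[of "idx u"] v_idx idx_lt by auto
  then show "Suc u \<in> set (take m P)" using a idx_lt lenP
    by (metis in_set_conv_nth length_take min_less_iff_conj)
qed


definition i1 where "i1 = idx (n - k - 1)"
definition w2 where "w2 = nat (modn (int (P ! 0) - int k - 1) n) - 1"
definition i2 where "i2 = idx w2"
definition lo where "lo = min (Suc i1) (Suc i2)"
definition hi where "hi = max (Suc i1) (Suc i2)"
definition F :: "nat \<Rightarrow> char" where
  "F j = (if j < lo then CHR ''a'' else if j < hi then CHR ''b'' else CHR ''c'')"

lemma chars: "CHR ''a'' < CHR ''b''" "CHR ''b'' < CHR ''c''" "CHR ''a'' < CHR ''c''"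
  by (simp_all add: less_char_def)

lemma F_mono: "j \<le> j' \<Longrightarrow> F j \<le> F j'"
  unfolding F_def using chars by (auto simp: less_imp_le)

lemma F_strict: "j = i1 \<or> j = i2 \<Longrightarrow> F j < F (Suc j)"
  unfolding F_def lo_def hi_def using chars by auto

lemma p0_lt: "p0 < n" using P_in[of 0] n2 by (auto simp: p0_def)

lemma w2_lt: "w2 < n"
proof -
  have "(int (P ! 0) - int k - 1 - 1) mod int n < int n" using n2 by simp
  then have "modn (int (P ! 0) - int k - 1) n \<le> int n" unfolding modn_def by linarith
  then show ?thesis unfolding w2_def using n2 by linarith
qed

lemma pos1_Suc: "u < n \<Longrightarrow> pos1 P (Suc u) = Suc (idx u)"
  unfolding pos1_def idx_def lenP by simp

lemma T_eq: "ternary k P = map (\<lambda>p. if p \<in> set (take lo P) then CHR ''a''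
                 else if p \<in> set (take hi P) then CHR ''b'' else CHR ''c'') [1..<n+1]"
proof -
  have e1: "n - k = Suc (n - k - 1)" using k1 kn n2 by simp
  have e2: "nat (modn (int (P ! 0) - int k - 1) n) = Suc w2"
  proof -
    have "modn (int (P ! 0) - int k - 1) n \<ge> 1" unfolding modn_def using n2 by simp
    then show ?thesis unfolding w2_def by linarith
  qed
  have "pos1 P (n - k) = Suc i1" using e1 pos1_Suc[of "n-k-1"] k1 i1_def n2 by simp
  moreover have "pos1 P (nat (modn (int (P ! 0) - int k - 1) n)) = Suc i2"
    using e2 pos1_Suc[OF w2_lt] i2_def by simp
  ultimately show ?thesis unfolding ternary_def lenP lo_def hi_def Let_def by simp
qed

abbreviation T where "T \<equiv> ternary k P"

lemma lenT: "length T = n" by (simp add: T_eq)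

lemma T_nth: "u < n \<Longrightarrow> T ! u = F (idx u)"
  by (simp add: T_eq F_def in_take del: upt_Suc)

lemma vlast: "int (v (n - 1)) = (int p0 - int k) mod int n"
proof -
  have "int (v (n - 1)) = (int p0 + int (n - 1) * int k) mod int n"
    unfolding v_def by (simp add: zmod_int)
  also have "int p0 + int (n - 1) * int k = (int p0 - int k) + int n * int k"
    using n2 by (simp add: of_nat_diff algebra_simps)
  also have "(int p0 - int k + int n * int k) mod int n = (int p0 - int k) mod int n"
    by simp
  finally show ?thesis .
qed

lemma w2_eq: "v (n - 1) \<ge> 1 \<Longrightarrow> w2 = v (n - 1) - 1"
proof -
  assume a: "v (n - 1) \<ge> 1"
  have P0: "int (P ! 0) = int p0 + 1" using P_in[of 0] n2 by (auto simp: p0_def)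
  have "modn (int (P ! 0) - int k - 1) n = (int p0 - int k - 1) mod int n + 1"
    unfolding modn_def P0 by simp
  also have "(int p0 - int k - 1) mod int n = ((int p0 - int k) mod int n - 1) mod int n"
    by (simp add: mod_diff_left_eq)
  also have "\<dots> = (int (v (n - 1)) - 1) mod int n" using vlast by simp
  also have "\<dots> = int (v (n - 1)) - 1" using a v_lt[of "n-1"] by simp
  finally show ?thesis unfolding w2_def using a by simp
qed

lemma i2_ne: "v (n - 1) \<ge> 1 \<Longrightarrow> i2 \<noteq> n - 1"
proof
  assume a: "v (n - 1) \<ge> 1" "i2 = n - 1"
  have "v i2 = w2" using v_idx[OF w2_lt] i2_def by simp
  then have "v (n - 1) = w2" using a(2) by simp
  then show False using a w2_eq by simp
qed

lemma cmp: "u < n \<Longrightarrow> idx u \<noteq> n - 1 \<Longrightarrow>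
   T ! u \<le> T ! ((u + k) mod n) \<and> (idx u = i1 \<or> idx u = i2 \<longrightarrow> T ! u < T ! ((u + k) mod n))"
  using idx_step[of u] T_nth F_mono F_strict n2 by simp


lemma k_mod: "k mod n \<noteq> 0" using k1 kn n2 by simp

lemma suf_less:
  assumes an: "a < n" and ia: "idx a \<noteq> n - 1" and bd: "b = (a + k) mod n"
  shows "drop a T < drop b T"
proof -
  have bn: "b < n" using bd n2 by simp
  have eqb: "b + t = (a + t + k) mod n" if "b + t < n" for t
  proof -
    have "b + t = (b + t) mod n" using that by simp
    also have "\<dots> = (a + k + t) mod n" unfolding bd by (simp add: mod_add_left_eq)
    finally show ?thesis by (simp add: algebra_simps)
  qed
  have le: "T ! (a + t) \<le> T ! (b + t) \<and>
            (idx (a + t) = i1 \<or> idx (a + t) = i2 \<longrightarrow> T ! (a + t) < T ! (b + t))"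
    if "a + t < n" "b + t < n" "idx (a + t) \<noteq> n - 1" for t
    using cmp[of "a + t"] that eqb by simp
  define m where "m = min (n - a) (n - b)"
  have dn: "drop a T ! t = T ! (a + t)" "drop b T ! t = T ! (b + t)" if "t < m" for t
    using that an bn lenT by (simp_all add: m_def)
  have prelast: "idx (a + (t - 1)) = i2 \<and> i2 \<noteq> n - 1"
    if "a + t = v (n - 1)" "t > 0" for t
  proof -
    have v1: "v (n - 1) \<ge> 1" using that by simp
    have "a + (t - 1) = w2" using w2_eq[OF v1] that by simp
    then show ?thesis using i2_def i2_ne[OF v1] by simp
  qed
  show ?thesis
  proof (cases "\<exists>t<m. T ! (a + t) \<noteq> T ! (b + t)")
    case True
    define t0 where "t0 = (LEAST t. t < m \<and> T ! (a + t) \<noteq> T ! (b + t))"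
    have t0: "t0 < m" "T ! (a + t0) \<noteq> T ! (b + t0)"
      using LeastI_ex[OF True] unfolding t0_def by auto
    have before: "T ! (a + t) = T ! (b + t)" if "t < t0" for t
      using not_less_Least[OF that[unfolded t0_def]] t0 that by auto
    have lt: "T ! (a + t0) < T ! (b + t0)"
    proof (cases "idx (a + t0) = n - 1")
      case False
      have "a + t0 < n" "b + t0 < n" using t0 by (auto simp: m_def)
      then have "T ! (a + t0) \<le> T ! (b + t0)" using le[of t0] False by blast
      then show ?thesis using t0(2) by (simp add: order_le_neq_trans)
    next
      case True
      then have av: "a + t0 = v (n - 1)" using v_idx[of "a + t0"] t0 m_def by fastforce
      have "t0 \<noteq> 0" using True ia by (metis add_0_right)
      then have pl: "idx (a + (t0 - 1)) = i2 \<and> i2 \<noteq> n - 1" using prelast av by simp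
      have "T ! (a + (t0 - 1)) < T ! (b + (t0 - 1))"
        using le[of "t0 - 1"] pl t0 by (auto simp: m_def)
      moreover have "T ! (a + (t0 - 1)) = T ! (b + (t0 - 1))" using before[of "t0 - 1"] \<open>t0 \<noteq> 0\<close> by linarith
      ultimately show ?thesis by simp
    qed
    have "take t0 (drop a T) = take t0 (drop b T)"
      by (rule nth_equalityI) (use t0 before dn lenT an bn in \<open>auto simp: m_def\<close>)
    moreover have "t0 < min (length (drop a T)) (length (drop b T))"
      using t0 lenT by (simp add: m_def)
    moreover have "(drop a T ! t0, drop b T ! t0) \<in> {(u, v). u < v}"
      using lt dn[OF t0(1)] by simp
    ultimately show ?thesis
      unfolding list_less_def lexord_take_index_conv by blast
  next
    case False
    then have alleq: "T ! (a + t) = T ! (b + t)" if "t < m" for t using that by auto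
    show ?thesis
    proof (cases "b < a")
      case True
      have "take (n - a) (drop b T) = drop a T"
        by (rule nth_equalityI) (use alleq True lenT an bn in \<open>auto simp: m_def\<close>)
      moreover have "length (drop a T) < length (drop b T)" using True lenT an by simp
      ultimately show ?thesis unfolding list_less_def lexord_take_index_conv
        using lenT by simp
    next
      case False
      have kn': "k < n" using kn n2 k1 by simp
      have ba: "b = a + k"
      proof (cases "a + k < n")
        case True
        then show ?thesis using bd by simp
      next
        case c: False
        then have "b = (a + k - n) mod n" using bd le_mod_geq[of n "a + k"] by simp
        also have "\<dots> = a + k - n" using kn' an by simp
        finally have "b < a" using kn' c by simp
        then show ?thesis using False by simp
      qed
      define t where "t = n - k - 1 - a"
      have at: "a + t = n - k - 1" using ba bn unfolding t_def by simp
      have tm: "t < m" using ba bn unfolding t_def m_def by simp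
      have ne: "T ! (a + t) \<noteq> T ! (b + t)"
      proof (cases "i1 = n - 1")
        case False
        have abt: "a + t < n" "b + t < n" using tm by (auto simp: m_def)
        have "idx (a + t) = i1" using at i1_def by simp
        then have "T ! (a + t) < T ! (b + t)" using le[OF abt] False by simp
        then show ?thesis by simp
      next
        case True
        have av: "a + t = v (n - 1)" using at True i1_def v_idx[of "n - k - 1"] n2 by simp
        have "t \<noteq> 0"
        proof
          assume "t = 0"
          then have "a = v (n - 1)" using av by simp
          moreover have "idx (v (n - 1)) = n - 1" using idx_v[of "n - 1"] n2 by simp
          ultimately show False using ia by simp
        qed
        then have pl: "idx (a + (t - 1)) = i2 \<and> i2 \<noteq> n - 1" using prelast av by simp
        have "T ! (a + (t - 1)) < T ! (b + (t - 1))"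
          using le[of "t - 1"] pl tm by (auto simp: m_def)
        then show ?thesis using alleq[of "t - 1"] tm by simp
      qed
      then show ?thesis using alleq tm by simp
    qed
  qed
qed


lemma P_map: "P = map (\<lambda>j. v j + 1) [0..<n]"
  by (rule nth_equalityI) (simp_all add: lenP nthP)

lemma SA_eq: "SA T = P"
proof -
  have "SA T = sort_key (\<lambda>i. drop (i - 1) T) [1..<n + 1]" unfolding SA_def lenT ..
  also have "\<dots> = P"
  proof (rule sort_key_inj_key_eq)
    show "mset [1..<n + 1] = mset P"
      using distP setP by (simp add: set_eq_iff_mset_eq_distinct[symmetric] atLeastAtMost_upt)
    show "inj_on (\<lambda>i. drop (i - 1) T) (set [1..<n + 1])"
    proof (rule inj_onI)
      fix x y assume "x \<in> set [1..<n + 1]" "y \<in> set [1..<n + 1]" "drop (x - 1) T = drop (y - 1) T"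
      then have "length (drop (x - 1) T) = length (drop (y - 1) T)" by simp
      with \<open>x \<in> _\<close> \<open>y \<in> _\<close> show "x = y" using lenT by auto
    qed
    show "sorted (map (\<lambda>i. drop (i - 1) T) P)"
      unfolding sorted_iff_nth_Suc
    proof (intro allI impI)
      fix i assume "Suc i < length (map (\<lambda>i. drop (i - 1) T) P)"
      then have i: "Suc i < n" using lenP by simp
      have "drop (v i) T < drop ((v i + k) mod n) T"
        by (rule suf_less) (use i v_lt idx_v in auto)
      then show "map (\<lambda>i. drop (i - 1) T) P ! i \<le> map (\<lambda>i. drop (i - 1) T) P ! Suc i"
        using i lenP nthP[of i] nthP[of "Suc i"] v_Suc[of i] by (simp add: less_imp_le)
    qed
  qed
  finally show ?thesis .
qed

lemma int_w2: "int w2 = (int p0 - int k - 1) mod int n"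
proof -
  have P0: "int (P ! 0) = int p0 + 1" using P_in[of 0] n2 by (auto simp: p0_def)
  have "modn (int (P ! 0) - int k - 1) n = (int p0 - int k - 1) mod int n + 1"
    unfolding modn_def P0 by simp
  moreover have "(int p0 - int k - 1) mod int n \<ge> 0" using n2 by simp
  ultimately show ?thesis unfolding w2_def by simp
qed

lemma pre_eq: "j < n \<Longrightarrow> nat (modn (int (v j + 1) - 1) n) - 1 = v ((Suc i2 + j) mod n)"
proof -
  assume j: "j < n"
  have L: "int (nat (modn (int (v j + 1) - 1) n) - 1) = (int p0 + int j * int k - 1) mod int n"
  proof -
    have "modn (int (v j + 1) - 1) n = (int (v j) - 1) mod int n + 1" unfolding modn_def by simp
    moreover have "(int (v j) - 1) mod int n \<ge> 0" using n2 by simp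
    moreover have "int (v j) = (int p0 + int j * int k) mod int n" unfolding v_def by (simp add: zmod_int)
    ultimately show ?thesis by (simp add: mod_diff_left_eq)
  qed
  have vi2: "int (v i2) = int w2" using v_idx[OF w2_lt] i2_def by simp
  have "int (v ((Suc i2 + j) mod n)) = (int p0 + int ((Suc i2 + j) mod n) * int k) mod int n"
    unfolding v_def by (simp add: zmod_int)
  also have "\<dots> = (int p0 + int (Suc i2 + j) * int k) mod int n"
    by (metis mod_add_right_eq mod_mult_left_eq zmod_int)
  also have "int p0 + int (Suc i2 + j) * int k = (int p0 + int i2 * int k) + (1 + int j) * int k"
    by (simp add: algebra_simps)
  also have "(int p0 + int i2 * int k + (1 + int j) * int k) mod int n
      = ((int p0 + int i2 * int k) mod int n + (1 + int j) * int k) mod int n"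
    by (simp add: mod_add_left_eq)
  also have "(int p0 + int i2 * int k) mod int n = int (v i2)" unfolding v_def by (simp add: zmod_int)
  also have "\<dots> = (int p0 - int k - 1) mod int n" using vi2 int_w2 by simp
  also have "((int p0 - int k - 1) mod int n + (1 + int j) * int k) mod int n
      = (int p0 - int k - 1 + (1 + int j) * int k) mod int n"
    by (simp add: mod_add_left_eq)
  also have "int p0 - int k - 1 + (1 + int j) * int k = int p0 + int j * int k - 1"
    by (simp add: algebra_simps)
  finally show ?thesis using L by simp
qed

lemma i2_lt: "i2 < n" using idx_lt[OF w2_lt] i2_def by simp
lemma i1_lt: "i1 < n" using idx_lt[of "n - k - 1"] i1_def n2 by simp

lemma rot: "s \<le> n \<Longrightarrow> map (\<lambda>j. (s + j) mod n) [0..<n] = [s..<n] @ [0..<s]"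
  by (rule nth_equalityI) (auto simp: nth_append less_diff_conv2 mod_if)

lemma BWT_eq: "BWT T = map F ([Suc i2..<n] @ [0..<Suc i2])"
proof -
  have "BWT T = map (\<lambda>j. F ((Suc i2 + j) mod n)) [0..<n]"
  proof (rule nth_equalityI)
    show "length (BWT T) = length (map (\<lambda>j. F ((Suc i2 + j) mod n)) [0..<n])"
      by (simp add: BWT_def SA_eq lenP)
    fix j assume "j < length (BWT T)"
    then have j: "j < n" by (simp add: BWT_def SA_eq lenP)
    have "BWT T ! j = T ! (nat (modn (int (v j + 1) - 1) n) - 1)"
      using j by (simp add: BWT_def SA_eq lenT lenP nthP)
    also have "\<dots> = T ! v ((Suc i2 + j) mod n)" using pre_eq j by simp
    also have "\<dots> = F ((Suc i2 + j) mod n)" using T_nth v_lt idx_v n2 by simp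
    finally show "BWT T ! j = map (\<lambda>j. F ((Suc i2 + j) mod n)) [0..<n] ! j" using j by simp
  qed
  also have "\<dots> = map F (map (\<lambda>j. (Suc i2 + j) mod n) [0..<n])" by simp
  also have "\<dots> = map F ([Suc i2..<n] @ [0..<Suc i2])" using rot[of "Suc i2"] i2_lt by simp
  finally show ?thesis .
qed

lemma setT: "set T = F ` {0..<n}"
proof -
  have "set T = (\<lambda>u. T ! u) ` {0..<n}"
    by (auto simp: set_conv_nth lenT)
  also have "\<dots> = (\<lambda>u. F (idx u)) ` {0..<n}"
    by (rule image_cong) (auto simp: T_nth)
  also have "\<dots> = F ` (idx ` {0..<n})" by auto
  also have "idx ` {0..<n} = {0..<n}"
  proof
    show "idx ` {0..<n} \<subseteq> {0..<n}" using idx_lt by auto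
    show "{0..<n} \<subseteq> idx ` {0..<n}"
    proof
      fix x assume "x \<in> {0..<n}"
      then have "x = idx (v x)" "v x \<in> {0..<n}" using idx_v v_lt by auto
      then show "x \<in> idx ` {0..<n}" by blast
    qed
  qed
  finally show ?thesis .
qed

lemma setBWT: "set (BWT T) = F ` {0..<n}"
proof -
  have "set ([Suc i2..<n] @ [0..<Suc i2]) = {0..<n}" using i2_lt by auto
  then show ?thesis unfolding BWT_eq set_map by simp
qed


lemma runs_eq: "runs (BWT T) = card (set (BWT T))"
proof -
  have lohi: "lo \<le> hi" "hi \<le> n" "1 \<le> lo" using i1_lt i2_lt by (auto simp: lo_def hi_def)
  note lh = lohi(1)
  have Fa: "map F [x..<y] = replicate (y - x) CHR ''a''" if "y \<le> lo" for x y
    by (rule map_const) (use that in \<open>auto simp: F_def\<close>)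
  have Fb: "map F [x..<y] = replicate (y - x) CHR ''b''" if "lo \<le> x" "y \<le> hi" for x y
    by (rule map_const) (use that in \<open>auto simp: F_def\<close>)
  have Fc: "map F [x..<y] = replicate (y - x) CHR ''c''" if "hi \<le> x" for x y
    by (rule map_const) (use that lh in \<open>auto simp: F_def\<close>)
  have ne: "CHR ''a'' \<noteq> CHR ''b''" "CHR ''b'' \<noteq> CHR ''c''" "CHR ''a'' \<noteq> CHR ''c''" by simp_all
  show ?thesis
  proof (cases "i2 \<le> i1")
    case True
    then have l: "Suc i2 = lo" by (simp add: lo_def)
    have "BWT T = replicate (hi - lo) CHR ''b'' @ replicate (n - hi) CHR ''c'' @ replicate lo CHR ''a''"
      unfolding BWT_eq l using lohi upt_split[of lo hi n] Fa[of lo 0] Fb[of lo hi] Fc[of hi n] by simp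
    then show ?thesis unfolding runs_def using cnt ne by metis
  next
    case False
    then have l: "Suc i2 = hi" by (simp add: hi_def)
    have "BWT T = replicate (n - hi) CHR ''c'' @ replicate lo CHR ''a'' @ replicate (hi - lo) CHR ''b''"
      unfolding BWT_eq l using lohi upt_split[of 0 lo hi] Fa[of lo 0] Fb[of lo hi] Fc[of hi n] by simp
    then show ?thesis unfolding runs_def using cnt ne by metis
  qed
qed

lemma main: "runs (BWT T) = card (set T)"
  using runs_eq setT setBWT by simp

end

theorem corollary6:
  fixes n k :: nat and P :: "nat list"
  assumes "n \<ge> 2" and "ap_perm n k P" and "P \<noteq> rev [1..<n+1]"
  shows "(card (set (ternary k P)) = 2 \<longrightarrow> runs (BWT (ternary k P)) = 2) \<and>
         (card (set (ternary k P)) = 3 \<longrightarrow> runs (BWT (ternary k P)) = 3)"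
proof -
  interpret apc n k P using assms(1,2) by unfold_locales
  show ?thesis using main by simp
qed

end
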